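(* Let $(\mathcal{P},E,U_{E,\mathcal{P}},\mathrm{tok})$ be a system and $C$ a clustering function satisfying the standing properties with constant $\epsilon>0$. Let $\mathcal{A}$ be the set of players $Q$ with $|\mathrm{util}_Q(e,\mathrm{true})|\le\epsilon$ for all $e\in E$, let $\hat{\mathcal{P}}\subseteq\mathcal{A}$, and let $D\subset\mathcal{P}\setminus\hat{\mathcal{P}}$ be a set of delegates. Let $\mathrm{tok}'$ be a new token map in which the players of $\hat{\mathcal{P}}$ delegate all their tokens to $D$: $\mathrm{tok}'(Q)=0$ for $Q\in\hat{\mathcal{P}}$, $\mathrm{tok}'(d)\ge\mathrm{tok}(d)$ for $d\in D$ with $\mathrm{tok}'(D)=\mathrm{tok}(D)+\mathrm{tok}(\hat{\mathcal{P}})$, and $\mathrm{tok}'(Q)=\mathrm{tok}(Q)$ for all other $Q$; utilities are unchanged. If $\mathrm{tok}(\mathcal{A})\ge\mathrm{tok}'([d])$ for every $d\in D$ (where $[d]$ is the voting bloc of $d$), then $$\mathrm{VBE}_{C,\min}(E,\mathcal{P},U_{E,\mathcal{P}},\mathrm{tok}')\ \ge\ \mathrm{VBE}_{C,\min}(E,\mathcal{P},U_{E,\mathcal{P}},\mathrm{tok}).$$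
   Context: A system consists of a finite set of players $\mathcal{P}$, a token map $\mathrm{tok}:\mathcal{P}\to\mathbb{R}^+$ (extended to subsets by summation), binary elections $E=\{e_1,\dots,e_m\}$, and for each player utilities $\mathrm{util}_P(e,\mathrm{true})\in\mathbb{R}$ (with $\mathrm{util}_P(e,\mathrm{false})=-\mathrm{util}_P(e,\mathrm{true})$), forming the utility vector $U_{E,P}\in\mathbb{R}^m$. A clustering function $C$ is an equivalence relation $\sim_C$ on $\mathbb{R}^m$, partitioning players into voting blocs $\mathcal{P}/\!\sim_C$ via $P_i\sim_C P_j$ iff $U_{E,P_i}\sim_C U_{E,P_j}$; $[P]$ is the bloc of $P$. Standing properties of $C$: (i) there is a constant $\epsilon>0$ such that if $|\mathrm{util}_{P_i}(e,\mathrm{true})|\le\epsilon$ and $|\mathrm{util}_{P_j}(e,\mathrm{true})|\le\epsilon$ for all $e\in E$, then $P_i\sim_C P_j$; (ii) if $\mathrm{util}_{P_i}(e,\mathrm{true})$ and $\mathrm{util}_{P_j}(e,\mathrm{true})$ have the same sign for every $e\in E$, then $P_i\sim_C P_j$. $\mathrm{VBE}_{C,\min}(E,\mathcal{P},U_{E,\mathcal{P}},\mathrm{tok})=-\log_2\big(\max_{B\in\mathcal{P}/\sim_C}\mathrm{tok}(B)/\sum_{P\in\mathcal{P}}\mathrm{tok}(P)\big)$. *)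

theory Defs
  imports "HOL-Analysis.Analysis"
begin

text \<open>Elections are indexed by a finite type 'm, so a utility vector lives in real^'m
  (this is R^m with m = CARD('m)). U p $ e is util_p(e, true).
  A clustering function is an equivalence relation C on real^'m.\<close>

definition bloc_rel :: "'p set \<Rightarrow> ('p \<Rightarrow> real^'m) \<Rightarrow> (real^'m) rel \<Rightarrow> 'p rel" where
  "bloc_rel Pl U C = {(p, q). p \<in> Pl \<and> q \<in> Pl \<and> (U p, U q) \<in> C}"

definition blocs :: "'p set \<Rightarrow> ('p \<Rightarrow> real^'m) \<Rightarrow> (real^'m) rel \<Rightarrow> 'p set set" where
  "blocs Pl U C = Pl // bloc_rel Pl U C"

definition bloc_of :: "'p set \<Rightarrow> ('p \<Rightarrow> real^'m) \<Rightarrow> (real^'m) rel \<Rightarrow> 'p \<Rightarrow> 'p set" where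
  "bloc_of Pl U C p = bloc_rel Pl U C `` {p}"

definition VBE_min :: "(real^'m) rel \<Rightarrow> 'p set \<Rightarrow> ('p \<Rightarrow> real^'m) \<Rightarrow> ('p \<Rightarrow> real) \<Rightarrow> real" where
  "VBE_min C Pl U tok =
     - log 2 (Max ((\<lambda>B. sum tok B) ` blocs Pl U C) / sum tok Pl)"

definition clustering_standing :: "(real^'m) rel \<Rightarrow> real \<Rightarrow> 'p set \<Rightarrow> ('p \<Rightarrow> real^'m) \<Rightarrow> bool" where
  "clustering_standing C \<epsilon> Pl U \<longleftrightarrow>
     equiv UNIV C \<and> \<epsilon> > 0 \<and>
     (\<forall>p\<in>Pl. \<forall>q\<in>Pl. (\<forall>e. \<bar>U p $ e\<bar> \<le> \<epsilon>) \<and> (\<forall>e. \<bar>U q $ e\<bar> \<le> \<epsilon>) \<longrightarrow> (U p, U q) \<in> C) \<and>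
     (\<forall>p\<in>Pl. \<forall>q\<in>Pl. (\<forall>e. sgn (U p $ e) = sgn (U q $ e)) \<longrightarrow> (U p, U q) \<in> C)"

end

theory Submission
  imports Defs
begin

theorem theorem4:
  fixes Pl :: "'p set" and U :: "'p \<Rightarrow> real^'m" and tok tok' :: "'p \<Rightarrow> real"
    and C :: "(real^'m) rel" and \<epsilon> :: real and A Phat D :: "'p set"
  assumes fin: "finite Pl"
    and pos: "\<forall>p\<in>Pl. tok p > 0"
    and cs: "clustering_standing C \<epsilon> Pl U"
    and Adef: "A = {Q \<in> Pl. \<forall>e. \<bar>U Q $ e\<bar> \<le> \<epsilon>}"
    and PA: "Phat \<subseteq> A"
    and DP: "D \<subseteq> Pl - Phat"
    and t1: "\<forall>Q\<in>Phat. tok' Q = 0"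
    and t2: "\<forall>d\<in>D. tok' d \<ge> tok d"
    and t3: "sum tok' D = sum tok D + sum tok Phat"
    and t4: "\<forall>Q\<in>Pl - Phat - D. tok' Q = tok Q"
    and t5: "\<forall>d\<in>D. sum tok A \<ge> sum tok' (bloc_of Pl U C d)"
  shows "VBE_min C Pl U tok' \<ge> VBE_min C Pl U tok"
proof (cases "Pl = {}")
  case True
  then show ?thesis by (simp add: VBE_min_def blocs_def)
next
  case False
  let ?R = "bloc_rel Pl U C"
  have eqC: "equiv UNIV C" using cs by (simp add: clustering_standing_def)
  have eqR: "equiv Pl ?R"
    using eqC unfolding equiv_def refl_on_def sym_def trans_def bloc_rel_def by blast
  have Rsub: "?R \<subseteq> Pl \<times> Pl" unfolding bloc_rel_def by auto
  have finB: "finite (blocs Pl U C)" unfolding blocs_def using fin Rsub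
    by (rule finite_quotient)
  have Bsub: "B \<subseteq> Pl" if "B \<in> blocs Pl U C" for B
    using that Rsub unfolding blocs_def by (auto elim!: quotientE)
  have bin: "bloc_of Pl U C p \<in> blocs Pl U C" if "p \<in> Pl" for p
    using that unfolding bloc_of_def blocs_def by (rule quotientI)
  have pin: "p \<in> bloc_of Pl U C p" if "p \<in> Pl" for p
    using that eqR unfolding bloc_of_def equiv_def refl_on_def by auto
  have nonneg: "\<forall>p\<in>Pl. tok p \<ge> 0" using pos by auto
  have nonneg': "\<forall>p\<in>Pl. tok' p \<ge> 0"
  proof
    fix p assume p: "p \<in> Pl"
    show "tok' p \<ge> 0"
    proof (cases "p \<in> Phat")
      case True then show ?thesis using t1 by simp
    next
      case False
      then show ?thesis using t2 t4 pos p by (cases "p \<in> D") (auto, fastforce)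
    qed
  qed
  have PhatPl: "Phat \<subseteq> Pl" using PA Adef by auto
  have finPh: "finite Phat" using PhatPl fin finite_subset by blast
  have finD: "finite D" using DP fin finite_subset by blast
  have disj: "Phat \<inter> D = {}" using DP by auto
  have split: "\<And>f :: 'p \<Rightarrow> real. sum f Pl = sum f Phat + sum f D + sum f (Pl - Phat - D)"
  proof -
    fix f :: "'p \<Rightarrow> real"
    have "Pl = Phat \<union> D \<union> (Pl - Phat - D)" using PhatPl DP by auto
    then have "sum f Pl = sum f (Phat \<union> D \<union> (Pl - Phat - D))" by simp
    also have "\<dots> = sum f Phat + sum f D + sum f (Pl - Phat - D)"
    proof -
      have "sum f (Phat \<union> D \<union> (Pl - Phat - D)) = sum f (Phat \<union> D) + sum f (Pl - Phat - D)"
        using finPh finD fin by (intro sum.union_disjoint) auto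
      moreover have "sum f (Phat \<union> D) = sum f Phat + sum f D"
        using finPh finD disj by (intro sum.union_disjoint) auto
      ultimately show ?thesis by simp
    qed
    finally show "sum f Pl = sum f Phat + sum f D + sum f (Pl - Phat - D)" .
  qed
  have S: "sum tok' Pl = sum tok Pl"
    using split[of tok'] split[of tok] t1 t3 t4 by simp
  have Spos: "sum tok Pl > 0" using pos False fin by (simp add: sum_pos)
  define M where "M = Max ((\<lambda>B. sum tok B) ` blocs Pl U C)"
  define M' where "M' = Max ((\<lambda>B. sum tok' B) ` blocs Pl U C)"
  obtain p0 where p0: "p0 \<in> Pl" using False by auto
  have Mge: "sum tok B \<le> M" if "B \<in> blocs Pl U C" for B
    unfolding M_def using finB that by simp
  have M'ge: "sum tok' B \<le> M'" if "B \<in> blocs Pl U C" for B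
    unfolding M'_def using finB that by simp
  have M0: "M \<ge> 0"
    using Mge[OF bin[OF p0]] Bsub[OF bin[OF p0]] fin nonneg
    by (meson order_trans subsetD sum_nonneg)
  have AM: "sum tok A \<le> M"
  proof (cases "A = {}")
    case True then show ?thesis using M0 by simp
  next
    case False
    then obtain a where a: "a \<in> A" by auto
    have aPl: "a \<in> Pl" using a Adef by auto
    have "A \<subseteq> bloc_of Pl U C a"
    proof
      fix q assume q: "q \<in> A"
      have "(U a, U q) \<in> C" using cs a q Adef unfolding clustering_standing_def by auto
      then show "q \<in> bloc_of Pl U C a" using q a Adef unfolding bloc_of_def bloc_rel_def by auto
    qed
    then have "sum tok A \<le> sum tok (bloc_of Pl U C a)"
      using Bsub[OF bin[OF aPl]] fin nonneg
      by (intro sum_mono2) (auto intro: finite_subset)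
    then show ?thesis using Mge[OF bin[OF aPl]] by linarith
  qed
  have MM: "M' \<le> M"
  proof -
    have "\<forall>B\<in>blocs Pl U C. sum tok' B \<le> M"
    proof
      fix B assume B: "B \<in> blocs Pl U C"
      have BPl: "B \<subseteq> Pl" using Bsub[OF B] .
      have finBB: "finite B" using BPl fin finite_subset by blast
      show "sum tok' B \<le> M"
      proof (cases "B \<inter> D = {}")
        case False
        then obtain d where d: "d \<in> B" "d \<in> D" by auto
        have "B = bloc_of Pl U C d"
        proof -
          obtain x where x: "x \<in> Pl" "B = ?R `` {x}" using B unfolding blocs_def by (auto elim!: quotientE)
          have "(x, d) \<in> ?R" using x d by auto
          then have "?R `` {x} = ?R `` {d}" by (rule equiv_class_eq[OF eqR])
          then show ?thesis using x unfolding bloc_of_def by simp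
        qed
        then show ?thesis using t5 d AM by fastforce
      next
        case True
        have "sum tok' B = sum tok' (B - Phat) + sum tok' (B \<inter> Phat)"
          using sum.Int_Diff[OF finBB, of tok' Phat] by linarith
        also have "sum tok' (B \<inter> Phat) = 0" using t1 by simp
        also have "sum tok' (B - Phat) = sum tok (B - Phat)"
          using t4 True BPl by (intro sum.cong) auto
        also have "sum tok (B - Phat) \<le> sum tok B"
          using finBB BPl nonneg by (intro sum_mono2) auto
        finally show ?thesis using Mge[OF B] by linarith
      qed
    qed
    then show ?thesis unfolding M'_def using finB bin[OF p0]
      by (subst Max_le_iff) auto
  qed
  have M'pos: "M' > 0"
  proof -
    have "sum tok' Pl > 0" using S Spos by simp
    then obtain p where p: "p \<in> Pl" "tok' p > 0"
      by (metis fin not_le sum_nonpos)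
    have "tok' p \<le> sum tok' (bloc_of Pl U C p)"
      using Bsub[OF bin[OF p(1)]] pin[OF p(1)] fin nonneg'
      by (intro member_le_sum) (auto intro: finite_subset)
    then show ?thesis using M'ge[OF bin[OF p(1)]] p by linarith
  qed
  have "log 2 (M' / sum tok Pl) \<le> log 2 (M / sum tok Pl)"
    using M'pos Spos MM by (simp add: divide_right_mono)
  then show ?thesis unfolding VBE_min_def M_def[symmetric] M'_def[symmetric] S by simp
qed

end
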